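(* Under assumption (A3), at any round $t$, for any fixed unit vector $\theta\in\mathbb R^d$ and for any arm $a_t\in\mathcal A_t$ selected by the agent (possibly depending on $\mathcal A_t$ and the history), $$\mathbb E_t\big[(\theta^\top x_{a_t})^2\,\big|\,|\mathcal A_t|\big]\ \ge\ \tilde\lambda_x:=\int_0^{\lambda_x}\Big(1-e^{-\frac{(\lambda_x-s)^2}{2\sigma^2}}\Big)^K\,ds,$$ where $K$ is an upper bound on $|\mathcal A_t|$ for all $t$.
   Context: Assumption (A3): at each round $t$ the arm set $\mathcal A_t$ has at most $K$ arms, and the feature vectors $x_a$, $a\in\mathcal A_t$, are drawn independently (of each other and of the past) from a fixed distribution $\rho$ on $\{x\in\mathbb R^d:\|x\|_2\le1\}$, with $\lambda_x:=\lambda_{\min}(\mathbb E_{x\sim\rho}[xx^\top])>0$; moreover for every fixed unit vector $z$ the centered variable $(z^\top x)^2-\mathbb E[(z^\top x)^2]$, $x\sim\rho$, is sub-Gaussian with variance proxy at most $\sigma^2$ (so that $\mathbb P((z^\top x)^2-\mathbb E[(z^\top x)^2]<-s)\le e^{-s^2/(2\sigma^2)}$ for $s>0$). $\mathbb E_t[\cdot]$ denotes conditional expectation given $(i_1,\mathcal A_1,r_1),\dots,(i_{t-1},\mathcal A_{t-1},r_{t-1}),i_t$. *)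

theory Defs
  imports "HOL-Probability.Probability"
begin

definition second_moment :: "(real^'d) measure \<Rightarrow> real^'d^'d" where
  "second_moment \<rho> = (\<chi> i j. \<integral>x. x $ i * x $ j \<partial>\<rho>)"

definition lambda_min :: "real^'n^'n \<Rightarrow> real" where
  "lambda_min A = Min {\<mu>. \<exists>v. v \<noteq> 0 \<and> A *v v = \<mu> *s v}"

definition subgaussian :: "'a measure \<Rightarrow> ('a \<Rightarrow> real) \<Rightarrow> real \<Rightarrow> bool" where
  "subgaussian M Y s2 \<longleftrightarrow> integrable M Y \<and>
     (\<forall>l::real. integrable M (\<lambda>\<omega>. exp (l * (Y \<omega> - integral\<^sup>L M Y))) \<and>
        (\<integral>\<omega>. exp (l * (Y \<omega> - integral\<^sup>L M Y)) \<partial>M) \<le> exp (l\<^sup>2 * s2 / 2))"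

end

theory Submission
  imports Defs
begin

lemma quad_scale: fixes A :: "real^'n^'n"
  shows "(c *\<^sub>R v) \<bullet> (A *v (c *\<^sub>R v)) = c\<^sup>2 * (v \<bullet> (A *v v))"
  by (simp add: matrix_vector_mult_scaleR power2_eq_square algebra_simps)

lemma sym_inner: fixes A :: "real^'n^'n" assumes "transpose A = A" shows "u \<bullet> (A *v v) = (A *v u) \<bullet> v"
proof -
  have "u \<bullet> (A *v v) = (u v* A) \<bullet> v" by (simp add: dot_lmul_matrix)
  also have "u v* A = transpose A *v u" by (simp add: transpose_matrix_vector)
  finally show ?thesis using assms by simp
qed

lemma lambda_min_le:
  fixes A :: "real^'n^'n"
  assumes sym: "transpose A = A" and th: "norm \<theta> = 1"
  shows "lambda_min A \<le> \<theta> \<bullet> (A *v \<theta>)"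
proof -
  define q where "q v = v \<bullet> (A *v v)" for v :: "real^'n"
  have cq: "continuous_on (sphere 0 1) q" unfolding q_def
    by (intro continuous_intros linear_continuous_on bounded_linear_intros)
       (simp add: matrix_vector_mul_linear linear_conv_bounded_linear[symmetric])
  have ne: "sphere (0::real^'n) 1 \<noteq> {}" by simp
  obtain v0 where v0: "v0 \<in> sphere 0 1" and v0min: "\<And>v. v \<in> sphere 0 1 \<Longrightarrow> q v0 \<le> q v"
    using continuous_attains_inf[OF compact_sphere ne cq] by blast
  define m where "m = q v0"
  have geq: "q w \<ge> m * (w \<bullet> w)" for w
  proof (cases "w = 0")
    case True thus ?thesis by (simp add: q_def)
  next
    case False
    hence nw: "norm w > 0" by simp
    have "inverse (norm w) *\<^sub>R w \<in> sphere 0 1" using nw by (simp add: norm_scaleR)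
    hence "m \<le> q (inverse (norm w) *\<^sub>R w)" using v0min m_def by blast
    also have "\<dots> = (inverse (norm w))\<^sup>2 * q w" unfolding q_def by (rule quad_scale)
    finally have "m * (norm w)\<^sup>2 \<le> q w" using nw
      by (simp add: field_simps power2_eq_square)
    thus ?thesis by (simp add: power2_norm_eq_inner)
  qed
  define g where "g w = q w - m * (w \<bullet> w)" for w
  have gpos: "g w \<ge> 0" for w using geq[of w] by (simp add: g_def)
  have v0n: "v0 \<bullet> v0 = 1" using v0 by (simp add: dot_square_norm)
  have g0: "g v0 = 0" by (simp add: g_def m_def v0n)
  define u where "u = A *v v0 - m *\<^sub>R v0"
  have expand: "g (v0 + t *\<^sub>R u) = g v0 + 2 * t * (u \<bullet> u) + t\<^sup>2 * g u" for t
proof -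
    have s1: "v0 \<bullet> (A *v u) = (A *v v0) \<bullet> u" by (rule sym_inner[OF sym])
    have s2: "(A *v v0) \<bullet> u = u \<bullet> u + m * (v0 \<bullet> u)" by (simp add: u_def inner_diff_left)
    have e1: "g (v0 + t *\<^sub>R u) = g v0 + t * (v0 \<bullet> (A *v u) + u \<bullet> (A *v v0) - 2 * m * (v0 \<bullet> u)) + t\<^sup>2 * g u"
    proof -
      have Am: "A *v (v0 + t *\<^sub>R u) = A *v v0 + t *\<^sub>R (A *v u)"
        by (simp add: matrix_vector_right_distrib matrix_vector_mult_scaleR)
      have qe: "q (v0 + t *\<^sub>R u) = q v0 + t * (v0 \<bullet> (A *v u)) + t * (u \<bullet> (A *v v0)) + t\<^sup>2 * q u"
        unfolding q_def Am by (simp add: inner_add_left inner_add_right power2_eq_square algebra_simps)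
      have ne: "(v0 + t *\<^sub>R u) \<bullet> (v0 + t *\<^sub>R u) = v0 \<bullet> v0 + 2 * t * (v0 \<bullet> u) + t\<^sup>2 * (u \<bullet> u)"
        by (simp add: inner_add_left inner_add_right power2_eq_square inner_commute[of u v0] algebra_simps)
      show ?thesis unfolding g_def qe ne by (simp add: algebra_simps)
    qed
    have "v0 \<bullet> (A *v u) + u \<bullet> (A *v v0) - 2 * m * (v0 \<bullet> u) = 2 * (u \<bullet> u)"
      using s1 s2 inner_commute[of u "A *v v0"] by simp
    with e1 show ?thesis by simp
  qed
  have "u \<bullet> u = 0"
  proof (rule ccontr)
    assume "u \<bullet> u \<noteq> 0"
    hence a: "u \<bullet> u > 0" by (simp add: order_le_neq_trans[OF inner_ge_zero] less_le)
    define c where "c = g u"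
    have c0: "c \<ge> 0" using gpos c_def by simp
    define t where "t = - (u \<bullet> u) / (c + 1)"
    have tneg: "t < 0" using a c0 by (simp add: t_def divide_neg_pos)
    have "t * c > - (u \<bullet> u)" using a c0 by (simp add: t_def field_simps)
    hence "2 * (u \<bullet> u) + t * c > 0" using a by linarith
    hence "t * (2 * (u \<bullet> u) + t * c) < 0" using tneg by (simp add: mult_neg_pos)
    moreover have "g (v0 + t *\<^sub>R u) = t * (2 * (u \<bullet> u) + t * c)"
      using expand[of t] g0 c_def by (simp add: power2_eq_square algebra_simps)
    ultimately show False using gpos by (metis not_le)
  qed
  hence "u = 0" by simp
  hence eig0: "A *v v0 = m *s v0" by (simp add: u_def scalar_mult_eq_scaleR)
  define S where "S = {\<mu>. \<exists>v. v \<noteq> 0 \<and> A *v v = \<mu> *s v}"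
  have v0nz: "v0 \<noteq> 0" using v0 by auto
  have mS: "m \<in> S" using eig0 v0nz S_def by blast
  have lower: "\<mu> \<ge> m" if "\<mu> \<in> S" for \<mu>
  proof -
    have "\<exists>v. v \<noteq> 0 \<and> A *v v = \<mu> *s v" using that by (simp add: S_def)
    then obtain v where v: "v \<noteq> 0" "A *v v = \<mu> *s v" by blast
    have "q v = v \<bullet> (\<mu> *\<^sub>R v)" unfolding q_def using v(2) by (simp only: scalar_mult_eq_scaleR)
    also have "\<dots> = \<mu> * (v \<bullet> v)" by (rule inner_scaleR_right)
    finally have "m * (v \<bullet> v) \<le> \<mu> * (v \<bullet> v)" using geq[of v] by linarith
    moreover have "v \<bullet> v > 0" using v(1) by simp
    ultimately show ?thesis by (meson mult_le_cancel_right_pos)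
  qed
  have "\<forall>\<mu>\<in>S. \<exists>v. v \<noteq> 0 \<and> A *v v = \<mu> *s v" by (simp add: S_def)
  then obtain e where e: "\<And>\<mu>. \<mu> \<in> S \<Longrightarrow> e \<mu> \<noteq> 0 \<and> A *v e \<mu> = \<mu> *s e \<mu>"
    by metis
  have einj: "inj_on e S"
  proof (rule inj_onI)
    fix x y assume "x \<in> S" "y \<in> S" "e x = e y"
    hence "x *s e x = y *s e x" "e x \<noteq> 0" using e by metis+
    thus "x = y" by (simp add: scalar_mult_eq_scaleR)
  qed
  have orth: "orthogonal (e x) (e y)" if "x \<in> S" "y \<in> S" "x \<noteq> y" for x y
  proof -
    have "e x \<bullet> (A *v e y) = (A *v e x) \<bullet> e y" by (rule sym_inner[OF sym])
    hence "y * (e x \<bullet> e y) = x * (e x \<bullet> e y)" using e that by (simp add: scalar_mult_eq_scaleR)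
    thus ?thesis using that by (simp add: orthogonal_def)
  qed
  have "pairwise orthogonal (e ` S)"
    unfolding pairwise_def using orth by (metis image_iff)
  moreover have "0 \<notin> e ` S" using e by auto
  ultimately have "independent (e ` S)" by (simp add: pairwise_orthogonal_independent)
  hence "finite (e ` S)" using independent_bound by blast
  hence finS: "finite S" using einj finite_imageD by blast
  have "lambda_min A = m" unfolding lambda_min_def S_def[symmetric]
    using finS mS lower by (intro Min_eqI) auto
  moreover have "m \<le> q \<theta>" using v0min[of \<theta>] th m_def by simp
  ultimately show ?thesis by (simp add: q_def)
qed
lemma chernoff_lower:
  fixes M :: "'a measure" and Y :: "'a \<Rightarrow> real"
  assumes P: "prob_space M" and sg: "subgaussian M Y s2" and s20: "0 \<le> s2"
    and Ym: "Y \<in> borel_measurable M"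
    and a0: "0 \<le> a" and at: "a \<le> integral\<^sup>L M Y - s"
  shows "measure M {x\<in>space M. Y x \<le> s} \<le> exp (- (a\<^sup>2 / (2 * s2)))"
proof -
  interpret prob_space M by (rule P)
  define \<mu> where "\<mu> = integral\<^sup>L M Y"
  define t where "t = \<mu> - s"
  show ?thesis
  proof (cases "s2 = 0")
    case True thus ?thesis by simp
  next
    case False
    hence s2p: "s2 > 0" using s20 by simp
    define l where "l = t / s2"
    have t0: "t \<ge> a" using at by (simp add: t_def \<mu>_def)
    hence l0: "l \<ge> 0" using a0 s2p by (simp add: l_def)
    define u where "u x = exp ((-l) * (Y x - \<mu>))" for x
    have ui: "integrable M u" and ub: "integral\<^sup>L M u \<le> exp ((-l)\<^sup>2 * s2 / 2)"
      using sg unfolding subgaussian_def u_def \<mu>_def by blast+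
    have um: "u \<in> borel_measurable M" using ui by (rule borel_measurable_integrable)
    define c where "c = exp (l * t)"
    have sub: "{x\<in>space M. Y x \<le> s} \<subseteq> {x\<in>space M. u x \<ge> c}"
    proof safe
      fix x assume "x \<in> space M" "Y x \<le> s"
      hence "l * t \<le> (-l) * (Y x - \<mu>)" using l0 unfolding t_def
        by (simp add: mult_left_mono algebra_simps)
      thus "c \<le> u x" by (simp add: c_def u_def)
    qed
    have "measure M {x\<in>space M. Y x \<le> s} \<le> measure M {x\<in>space M. u x \<ge> c}"
      by (rule finite_measure_mono[OF sub]) (use um in measurable)
    also have "\<dots> \<le> integral\<^sup>L M u / c"
      by (rule integral_Markov_inequality_measure[OF ui, of "space M"]) (auto simp: c_def u_def)
    also have "\<dots> \<le> exp ((-l)\<^sup>2 * s2 / 2) / c"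
      by (rule divide_right_mono[OF ub]) (simp add: c_def)
    also have "\<dots> = exp ((-l)\<^sup>2 * s2 / 2 - l * t)" by (simp add: c_def exp_diff)
    also have "(-l)\<^sup>2 * s2 / 2 - l * t = - (t\<^sup>2 / (2 * s2))"
      using s2p by (simp add: l_def power2_eq_square field_simps)
    also have "exp (- (t\<^sup>2 / (2 * s2))) \<le> exp (- (a\<^sup>2 / (2 * s2)))"
      using t0 a0 s2p by (simp add: divide_right_mono power_mono)
    finally show ?thesis .
  qed
qed

theorem mainTheorem6:
  fixes \<rho> :: "(real^'d) measure" and \<sigma> :: real and K n :: nat
    and \<theta> :: "real^'d" and sel :: "(nat \<Rightarrow> real^'d) \<Rightarrow> nat"
  assumes rho_prob: "prob_space \<rho>"
    and rho_sets: "sets \<rho> = sets borel"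
    and rho_ball: "AE x in \<rho>. norm x \<le> 1"
    and lam_pos: "lambda_min (second_moment \<rho>) > 0"
    and subg: "\<And>z. norm z = 1 \<Longrightarrow> subgaussian \<rho> (\<lambda>x. (z \<bullet> x)\<^sup>2) (\<sigma>\<^sup>2)"
    and n_pos: "1 \<le> n" and n_le_K: "n \<le> K"
    and theta_unit: "norm \<theta> = 1"
    and sel_meas: "sel \<in> measurable (PiM {..<n} (\<lambda>_. \<rho>)) (count_space UNIV)"
    and sel_range: "\<And>xs. xs \<in> space (PiM {..<n} (\<lambda>_. \<rho>)) \<Longrightarrow> sel xs < n"
  shows "(\<integral>xs. (\<theta> \<bullet> xs (sel xs))\<^sup>2 \<partial>(PiM {..<n} (\<lambda>_. \<rho>)))
      \<ge> integral {0..lambda_min (second_moment \<rho>)}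
           (\<lambda>s. (1 - exp (- ((lambda_min (second_moment \<rho>) - s)\<^sup>2 / (2 * \<sigma>\<^sup>2)))) ^ K)"
  proof -
  interpret rho: prob_space \<rho> by (rule rho_prob)
  define M where "M = PiM {..<n} (\<lambda>_::nat. \<rho>)"
  interpret PM: product_prob_space "\<lambda>_::nat. \<rho>" "{..<n}"
    unfolding product_prob_space_def product_prob_space_axioms_def product_sigma_finite_def
    using rho.sigma_finite_measure_axioms rho_prob by simp
  interpret FM: finite_product_prob_space "\<lambda>_::nat. \<rho>" "{..<n}"
    unfolding finite_product_prob_space_def finite_product_sigma_finite_def finite_product_sigma_finite_axioms_def
    using PM.product_prob_space_axioms PM.product_sigma_finite_axioms by simp
  have Mprob: "prob_space M" unfolding M_def by (intro prob_space_PiM rho_prob)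
  interpret MP: prob_space M by (rule Mprob)
  define lam where "lam = lambda_min (second_moment \<rho>)"
  define Y where "Y x = (\<theta> \<bullet> x)\<^sup>2" for x :: "real^'d"
  have Y0: "Y x \<ge> 0" for x by (simp add: Y_def)
  have Yle: "Y x \<le> 1" if "norm x \<le> 1" for x
  proof -
    have "\<bar>\<theta> \<bullet> x\<bar> \<le> norm \<theta> * norm x" by (rule Cauchy_Schwarz_ineq2)
    also have "\<dots> \<le> 1" using that theta_unit by simp
    finally have "\<bar>\<theta> \<bullet> x\<bar> \<le> 1" .
    thus ?thesis unfolding Y_def by (simp add: abs_square_le_1)
  qed
  have bm: "\<And>f::real^'d \<Rightarrow> real. f \<in> borel_measurable borel \<Longrightarrow> f \<in> borel_measurable \<rho>"
    using measurable_cong_sets[OF rho_sets refl] by blast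
  have Ym[measurable]: "Y \<in> borel_measurable \<rho>"
    by (rule bm) (simp add: Y_def borel_measurable_continuous_onI continuous_intros)
  define Sig where "Sig = second_moment \<rho>"
  have comp_int: "integrable \<rho> (\<lambda>x. x $ i * x $ j)" for i j
  proof (rule rho.integrable_const_bound[where B=1])
    show "AE x in \<rho>. norm (x $ i * x $ j) \<le> 1"
      using rho_ball
    proof eventually_elim
      case (elim x)
      have "\<bar>x $ i\<bar> \<le> 1" "\<bar>x $ j\<bar> \<le> 1"
        using component_le_norm_cart[of x i] component_le_norm_cart[of x j] elim by linarith+
      thus ?case by (simp add: abs_mult mult_le_one)
    qed
    show "(\<lambda>x. x $ i * x $ j) \<in> borel_measurable \<rho>"
      by (rule bm) (simp add: borel_measurable_continuous_onI continuous_intros)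
  qed
  have symS: "transpose Sig = Sig"
    by (simp add: Sig_def second_moment_def transpose_def vec_eq_iff mult.commute)
  have quad: "\<theta> \<bullet> (Sig *v \<theta>) = integral\<^sup>L \<rho> Y"
  proof -
    have "\<theta> \<bullet> (Sig *v \<theta>) = (\<Sum>i\<in>UNIV. \<Sum>j\<in>UNIV. \<theta> $ i * \<theta> $ j * (\<integral>x. x $ i * x $ j \<partial>\<rho>))"
      by (simp add: inner_vec_def matrix_vector_mult_def Sig_def second_moment_def sum_distrib_left mult_ac)
    also have "\<dots> = (\<integral>x. (\<Sum>i\<in>UNIV. \<Sum>j\<in>UNIV. \<theta> $ i * \<theta> $ j * (x $ i * x $ j)) \<partial>\<rho>)"
      using comp_int by (simp add: integral_sum integrable_sum)
    also have "\<dots> = integral\<^sup>L \<rho> Y"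
      by (rule Bochner_Integration.integral_cong)
         (simp_all add: Y_def inner_vec_def power2_eq_square sum_product mult.assoc mult.left_commute)
    finally show ?thesis .
  qed
  have lam_le: "lam \<le> integral\<^sup>L \<rho> Y"
    using lambda_min_le[OF symS theta_unit] quad by (simp add: lam_def Sig_def)
  define e where "e s = exp (- ((lam - s)\<^sup>2 / (2 * \<sigma>\<^sup>2)))" for s
  define p where "p s = measure \<rho> {x\<in>space \<rho>. s < Y x}" for s
  have sgY: "subgaussian \<rho> Y (\<sigma>\<^sup>2)"
    using subg[OF theta_unit] by (simp add: Y_def[abs_def])
  have e1: "e s \<le> 1" for s
    unfolding e_def by simp
  have pbound: "1 - e s \<le> p s" if "s \<in> {0..lam}" for s
  proof -
    have ch: "measure \<rho> {x\<in>space \<rho>. Y x \<le> s} \<le> e s"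
      unfolding e_def
      by (rule chernoff_lower[OF rho_prob sgY _ Ym]) (use that lam_le in auto)
    have "{x\<in>space \<rho>. s < Y x} = space \<rho> - {x\<in>space \<rho>. Y x \<le> s}" by auto
    hence "p s = 1 - measure \<rho> {x\<in>space \<rho>. Y x \<le> s}"
      unfolding p_def by (simp add: rho.prob_compl)
    thus ?thesis using ch by simp
  qed
  have fle: "(1 - e s) ^ K \<le> p s ^ n" if "s \<in> {0..lam}" for s
  proof -
    have "(1 - e s) ^ K \<le> (1 - e s) ^ n"
      by (rule power_decreasing[OF n_le_K]) (use e1[of s] in \<open>auto simp: e_def\<close>)
    also have "\<dots> \<le> p s ^ n"
      by (rule power_mono[OF pbound[OF that]]) (use e1[of s] in simp)
    finally show ?thesis .
  qed
  have spM: "space M = PiE {..<n} (\<lambda>_. space \<rho>)" unfolding M_def by (simp add: space_PiM)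
  have selM[measurable]: "sel \<in> measurable M (count_space UNIV)" using sel_meas by (simp add: M_def)
  have compM[measurable]: "(\<lambda>xs. Y (xs i)) \<in> borel_measurable M" if "i < n" for i
    unfolding M_def by (rule measurable_compose[OF measurable_component_singleton[where M="\<lambda>_. \<rho>"] Ym]) (use that in auto)
  define G where "G xs = Y (xs (sel xs))" for xs :: "nat \<Rightarrow> real^'d"
  have Gm: "G \<in> borel_measurable M"
  proof -
    have "(\<lambda>xs. Y (xs (sel xs))) \<in> borel_measurable M"
    proof (rule measurable_compose_countable'[OF compM])
      show "sel \<in> measurable M (count_space {..<n})"
        using selM sel_range unfolding measurable_count_space_eq2_countable
        by (auto simp: M_def)
    qed auto
    thus ?thesis by (simp add: G_def[abs_def])
  qed
  have aeM: "AE xs in M. \<forall>i\<in>{..<n}. norm (xs i) \<le> 1"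
    unfolding M_def
    by (intro AE_finite_allI AE_PiM_component[OF rho_prob] rho_ball) auto
  have Gi: "integrable M G"
  proof (rule MP.integrable_const_bound[where B=1, OF _ Gm])
    show "AE xs in M. norm (G xs) \<le> 1"
      using aeM AE_space
    proof eventually_elim
      case (elim xs)
      hence "sel xs < n" using sel_range by (simp add: M_def)
      hence "norm (xs (sel xs)) \<le> 1" using elim by auto
      thus ?case using Yle Y0 by (simp add: G_def)
    qed
  qed
  define f where "f s = (1 - e s) ^ K" for s
  have f0: "0 \<le> f s" for s using e1[of s] by (simp add: f_def)
  have fint: "(f has_integral integral {0..lam} f) {0..lam}"
    by (intro integrable_integral integrable_continuous_interval)
       (unfold f_def e_def divide_inverse, intro continuous_intros)
  define S where "S = {z \<in> space (M \<Otimes>\<^sub>M lborel). (\<forall>i\<in>{..<n}. snd z < Y (fst z i)) \<and> snd z \<in> {0..lam}}"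
  have Sm: "S \<in> sets (M \<Otimes>\<^sub>M lborel)"
  proof -
    have "Measurable.pred (M \<Otimes>\<^sub>M lborel) (\<lambda>z. \<forall>i\<in>{..<n}. snd z < Y (fst z i))"
    proof (intro pred_intros_finite)
      fix i assume "i \<in> {..<n}"
      hence [measurable]: "(\<lambda>xs. Y (xs i)) \<in> borel_measurable M" using compM by simp
      show "Measurable.pred (M \<Otimes>\<^sub>M lborel) (\<lambda>z. snd z < Y (fst z i))" by measurable
    qed simp
    moreover have "Measurable.pred (M \<Otimes>\<^sub>M lborel) (\<lambda>z. snd z \<in> {0..lam})" by measurable
    ultimately show ?thesis unfolding S_def by measurable
  qed
  interpret PS: pair_sigma_finite M lborel
    by (intro pair_sigma_finite.intro MP.sigma_finite_measure_axioms) (simp add: lborel.sigma_finite_measure_axioms)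
  have spP: "space (M \<Otimes>\<^sub>M lborel) = space M \<times> UNIV" by (simp add: space_pair_measure)
  have Aeq: "{xs\<in>space M. \<forall>i\<in>{..<n}. s < Y (xs i)} = PiE {..<n} (\<lambda>_. {x\<in>space \<rho>. s < Y x})" for s
    unfolding spM PiE_def Pi_def by blast
  have c1: "ennreal (integral {0..lam} f) = (\<integral>\<^sup>+ s. ennreal (f s) * indicator {0..lam} s \<partial>lborel)"
    by (rule nn_integral_has_integral_lebesgue'[OF _ fint, symmetric]) (simp add: f0)
  also have "\<dots> \<le> (\<integral>\<^sup>+ s. ennreal (p s ^ n) * indicator {0..lam} s \<partial>lborel)"
    by (intro nn_integral_mono) (auto simp: indicator_def f_def intro!: ennreal_leI fle)
  also have "\<dots> = (\<integral>\<^sup>+ s. (\<integral>\<^sup>+ xs. indicator S (xs, s) \<partial>M) \<partial>lborel)"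
  proof (rule nn_integral_cong)
    fix s :: real
    have pm: "{x\<in>space \<rho>. s < Y x} \<in> sets \<rho>" by measurable
    have "ennreal (p s ^ n) = emeasure M (PiE {..<n} (\<lambda>_. {x\<in>space \<rho>. s < Y x}))"
      unfolding M_def using pm
      by (simp add: PM.emeasure_PiM rho.emeasure_eq_measure p_def ennreal_power measure_nonneg)
    also have "\<dots> = emeasure M {xs\<in>space M. \<forall>i\<in>{..<n}. s < Y (xs i)}" by (simp add: Aeq)
    finally have em: "ennreal (p s ^ n) = emeasure M {xs\<in>space M. \<forall>i\<in>{..<n}. s < Y (xs i)}" .
    have "(\<integral>\<^sup>+ xs. indicator S (xs, s) \<partial>M) =
          (\<integral>\<^sup>+ xs. indicator {xs\<in>space M. \<forall>i\<in>{..<n}. s < Y (xs i)} xs * indicator {0..lam} s \<partial>M)"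
      by (rule nn_integral_cong) (auto simp: S_def spP indicator_def)
    also have "\<dots> = emeasure M {xs\<in>space M. \<forall>i\<in>{..<n}. s < Y (xs i)} * indicator {0..lam} s"
    proof -
      have "{xs\<in>space M. \<forall>i\<in>{..<n}. s < Y (xs i)} \<in> sets M"
      proof -
        have "PiE {..<n} (\<lambda>_. {x\<in>space \<rho>. s < Y x}) \<in> sets M"
          unfolding M_def using pm by (intro sets_PiM_I_finite) auto
        thus ?thesis by (simp only: Aeq)
      qed
      thus ?thesis by (simp add: nn_integral_multc)
    qed
    finally show "ennreal (p s ^ n) * indicator {0..lam} s = (\<integral>\<^sup>+ xs. indicator S (xs, s) \<partial>M)"
      using em by simp
  qed
  also have "\<dots> = (\<integral>\<^sup>+ xs. (\<integral>\<^sup>+ s. indicator S (xs, s) \<partial>lborel) \<partial>M)"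
    by (rule PS.Fubini') (simp, rule borel_measurable_indicator[OF Sm])
  also have "\<dots> \<le> (\<integral>\<^sup>+ xs. ennreal (G xs) \<partial>M)"
  proof (rule nn_integral_mono)
    fix xs assume xs: "xs \<in> space M"
    have "(\<integral>\<^sup>+ s. indicator S (xs, s) \<partial>lborel) \<le> (\<integral>\<^sup>+ s. indicator {0..G xs} s \<partial>lborel)"
    proof (rule nn_integral_mono)
      fix s
      have "sel xs < n" using sel_range xs by (simp add: M_def)
      thus "indicator S (xs, s) \<le> (indicator {0..G xs} s :: ennreal)"
        by (auto simp: indicator_def S_def G_def less_imp_le)
    qed
    also have "\<dots> = ennreal (G xs)" using Y0 by (simp add: G_def)
    finally show "(\<integral>\<^sup>+ s. indicator S (xs, s) \<partial>lborel) \<le> ennreal (G xs)" .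
  qed
  also have "\<dots> = ennreal (integral\<^sup>L M G)"
    by (rule nn_integral_eq_integral[OF Gi]) (simp add: G_def Y0)
  finally have fin: "ennreal (integral {0..lam} f) \<le> ennreal (integral\<^sup>L M G)" .
  have "integral {0..lam} f \<le> integral\<^sup>L M G"
    using fin by (simp add: ennreal_le_iff G_def Y0)
  thus ?thesis unfolding f_def[abs_def] e_def[abs_def] lam_def G_def[abs_def] Y_def[abs_def] M_def by simp
qed

end
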